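(* Let $3\le l\le 9$ and let $k, r_1,\dots,r_l$ be integers with $r_1\le r_2\le\cdots\le r_l\le k$ and $2k+3\le r_1+r_2+r_3$. Then $$c(\mathbf r;k)=\binom{k+2}{2}-\sum_{i=1}^l\binom{k-r_i+2}{2}>0.$$
   Context: $c(\mathbf r;k)$ is the virtual dimension of the degree-$k$ part of $F[x,y,z]$ modulo the ideal generated by $p_i^{r_i}$ for $l$ points in $\mathbb P^2$; under the hypotheses all $r_i\le k$, so it is given by the displayed formula. *)

theory Defs
  imports Main
begin

text \<open>Virtual dimension c(r;k) of the degree-k part of F[x,y,z] modulo the ideal
generated by the powers p_i^{r_i}, for multiplicities r_1,...,r_l all at most k:
binom(k+2,2) - sum_i binom(k-r_i+2,2).\<close>
definition vdim :: "nat \<Rightarrow> (nat \<Rightarrow> nat) \<Rightarrow> nat \<Rightarrow> int" where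
  "vdim l r k = int ((k + 2) choose 2) - (\<Sum>i = 1..l. int ((k - r i + 2) choose 2))"

end

theory Submission
  imports Defs
begin

lemma two_choose: "2 * int ((n + 2) choose 2) = int (n + 2) * int (n + 1)"
proof -
  have "(n + 2) choose 2 = (n+2)*(n+1) div 2" by (simp add: choose_two)
  moreover have "even ((n+2)*(n+1))" by simp
  ultimately show ?thesis by (metis dvd_mult_div_cancel of_nat_mult of_nat_numeral)
qed

lemma choose_mono2: "a \<le> b \<Longrightarrow> int ((a + 2) choose 2) \<le> int ((b + 2) choose 2)"
  using binomial_right_mono[of "a+2" "b+2" 2] by simp

lemma mono_r:
  fixes r :: "nat \<Rightarrow> nat" and i j l :: nat
  assumes "\<forall>i. 1 \<le> i \<and> i < l \<longrightarrow> r i \<le> r (i + 1)"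
    and "1 \<le> i" "i \<le> j" "j \<le> l"
  shows "r i \<le> (r j :: nat)"
  using assms(2-4)
proof (induction j)
  case 0 then show ?case by simp
next
  case (Suc j)
  show ?case
  proof (cases "i = Suc j")
    case True then show ?thesis by simp
  next
    case False
    then have "r i \<le> r j" using Suc by simp
    also have "r j \<le> r (Suc j)" using assms(1) Suc.prems False by simp
    finally show ?thesis .
  qed
qed

lemma key:
  fixes x1 x2 x3 k :: int
  assumes "0 \<le> x3" "x3 \<le> x2" "x2 \<le> x1" "x1 + x2 + x3 + 3 \<le> k"
  shows "(x1+2)*(x1+1) + (x2+2)*(x2+1) + 7*((x3+2)*(x3+1)) < (k+2)*(k+1)"
proof -
  have "(x1+x2+x3+5)*(x1+x2+x3+4) \<le> (k+2)*(k+1)"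
    using assms by (intro mult_mono) auto
  moreover have "x1*x2 \<ge> x3*x3" "x1*x3 \<ge> x3*x3" "x2*x3 \<ge> x3*x3"
    using assms by (auto intro: mult_mono)
  ultimately show ?thesis using assms by (simp add: algebra_simps)
qed

theorem mainTheorem8:
  fixes l k :: nat and r :: "nat \<Rightarrow> nat"
  assumes "3 \<le> l" and "l \<le> 9"
    and "\<forall>i. 1 \<le> i \<and> i < l \<longrightarrow> r i \<le> r (i + 1)"
    and "r l \<le> k"
    and "2 * k + 3 \<le> r 1 + r 2 + r 3"
  shows "vdim l r k > 0"
proof -
  define g where "g i = int ((k - r i + 2) choose 2)" for i
  have m: "\<And>i j. 1 \<le> i \<Longrightarrow> i \<le> j \<Longrightarrow> j \<le> l \<Longrightarrow> r i \<le> r j"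
    using mono_r[OF assms(3)] by blast
  have r12: "r 1 \<le> r 2" and r23: "r 2 \<le> r 3" and r3l: "r 3 \<le> r l"
    using m assms(1) by auto
  have gle: "g i \<le> g 3" if "i \<in> {4..l}" for i
    unfolding g_def using m[of 3 i] that by (intro choose_mono2) auto
  have "{1..l} = {1,2,3} \<union> {4..l}" using assms(1) by auto
  then have "(\<Sum>i=1..l. g i) = g 1 + g 2 + g 3 + (\<Sum>i=4..l. g i)"
    by (simp add: sum.union_disjoint)
  also have "(\<Sum>i=4..l. g i) \<le> (\<Sum>i=4..l. g 3)" using gle by (intro sum_mono) auto
  also have "\<dots> = int (l - 3) * g 3" by simp
  also have "\<dots> \<le> 6 * g 3"
    using assms(2) by (intro mult_right_mono) (auto simp: g_def)
  finally have S: "(\<Sum>i=1..l. g i) \<le> g 1 + g 2 + 7 * g 3" by simp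
  have "2 * (g 1 + g 2 + 7 * g 3) < 2 * int ((k + 2) choose 2)"
  proof -
    have "2 * (g 1 + g 2 + 7 * g 3) = int (k - r 1 + 2) * int (k - r 1 + 1)
       + int (k - r 2 + 2) * int (k - r 2 + 1) + 7 * (int (k - r 3 + 2) * int (k - r 3 + 1))"
      unfolding g_def using two_choose[of "k - r 1"] two_choose[of "k - r 2"] two_choose[of "k - r 3"]
      by (simp add: algebra_simps)
    also have "\<dots> < int (k + 2) * int (k + 1)"
      using key[of "int (k - r 3)" "int (k - r 2)" "int (k - r 1)" "int k"]
        r12 r23 r3l assms(4,5) by (simp add: of_nat_diff algebra_simps)
    also have "\<dots> = 2 * int ((k + 2) choose 2)" using two_choose by simp
    finally show ?thesis .
  qed
  then show ?thesis using S unfolding vdim_def g_def by simp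
qed

end
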